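(* Let $(\tau_n)$ be a sequence of positive reals with $\tau_n\to\infty$ and let $g:(0,\infty)\to(0,\infty)$ satisfy $g(\tau)\to\infty$ as $\tau\to\infty$. Then there is a Lebesgue conull set $E\subset(0,\infty)$ such that for every $r\in E$ and every $k\in\mathbb{N}$, $$\limsup_{n\to\infty}\ \tau_n^{1/2}\,|J_{k/2}(r\tau_n)|\,g(\tau_n)=\infty,$$ where $J_\nu$ denotes the Bessel function of the first kind of order $\nu$. *)

theory Defs
  imports "HOL-Analysis.Analysis"
begin

definition bessel_J :: "real \<Rightarrow> real \<Rightarrow> real" where
  "bessel_J \<nu> x = (\<Sum>m. (-1) ^ m / (fact m * Gamma (real m + \<nu> + 1))
                         * (x / 2) ^ (2 * m) * (x / 2) powr \<nu>)"

end

theory Submission imports Defs begin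

lemma sublevel:
  fixes v v' v'' :: "real \<Rightarrow> real"
  assumes AB: "A \<le> B" and L: "L \<ge> 1" and c: "c > 0" and d: "\<delta> > 0" "\<delta>^2 \<le> c/2"
  and D1: "\<And>x. x \<in> {A..B} \<Longrightarrow> (v has_real_derivative v' x) (at x)"
  and D2: "\<And>x. x \<in> {A..B} \<Longrightarrow> (v' has_real_derivative v'' x) (at x)"
  and E: "\<And>x. x \<in> {A..B} \<Longrightarrow> c \<le> (v x)^2 + (v' x / L)^2"
  and B1: "\<And>x. x \<in> {A..B} \<Longrightarrow> \<bar>v' x\<bar> \<le> L * M1"
  and B2: "\<And>x. x \<in> {A..B} \<Longrightarrow> \<bar>v'' x\<bar> \<le> L^2 * M2"
  shows "{x\<in>{A..B}. \<bar>v x\<bar> \<le> \<delta>} \<in> lmeasurable \<and>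
         measure lebesgue {x\<in>{A..B}. \<bar>v x\<bar> \<le> \<delta>} \<le> (4/c) * (pi*\<delta>*M1/L + pi/2*\<delta>*M2*(B-A))"
proof -
  define F where "F = {x\<in>{A..B}. \<bar>v x\<bar> \<le> \<delta>}"
  have cont: "continuous_on {A..B} v"
    using D1 by (meson DERIV_isCont continuous_at_imp_continuous_on)
  have "F = {A..B} \<inter> v -` {-\<delta>..\<delta>}" unfolding F_def by auto
  hence "closed F" using continuous_closed_preimage[OF cont] by simp
  moreover have "bounded F" unfolding F_def by (rule bounded_subset[of "{A..B}"]) auto
  ultimately have "compact F" by (simp add: compact_eq_bounded_closed)
  hence Fm: "F \<in> lmeasurable" by (rule lmeasurable_compact)
  have FAB: "F \<subseteq> {A..B}" unfolding F_def by auto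
  have L0: "L > 0" using L by simp
  define G where "G x = \<delta> / L^2 * (arctan (v x / \<delta>) * v' x)" for x
  define G' where "G' x = (v' x)^2 / (L^2 * (1 + (v x/\<delta>)^2)) + \<delta> * arctan (v x / \<delta>) * v'' x / L^2" for x
  have DG: "(G has_real_derivative G' x) (at x)" if "x \<in> {A..B}" for x
  proof -
    have 1: "((\<lambda>x. arctan (v x / \<delta>)) has_real_derivative inverse (1 + (v x / \<delta>)^2) * (v' x / \<delta>)) (at x)"
      by (rule DERIV_chain2[OF DERIV_arctan]) (use d in \<open>auto intro!: derivative_eq_intros D1 that\<close>)
    have "(G has_real_derivative \<delta> / L^2 * ((inverse (1 + (v x / \<delta>)^2) * (v' x / \<delta>)) * v' x + arctan (v x / \<delta>) * v'' x)) (at x)"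
      unfolding G_def by (rule DERIV_cmult) (use d in \<open>auto intro!: derivative_eq_intros 1 D1 D2 that\<close>)
    moreover have "\<delta> / L^2 * ((inverse (1 + (v x / \<delta>)^2) * (v' x / \<delta>)) * v' x + arctan (v x / \<delta>) * v'' x) = G' x"
    proof -
      have p: "1 + (v x / \<delta>)^2 > 0" by (simp add: add_pos_nonneg)
      have q: "\<delta>^2 + (v x)^2 > 0" using d by (simp add: add_pos_nonneg)
      have r: "\<delta> * \<delta>^2 + \<delta> * (v x)^2 > 0" using d q by (metis distrib_left mult_pos_pos)
      have e1: "\<delta> / L^2 * (inverse (1 + (v x / \<delta>)^2) * (v' x / \<delta>) * v' x) = (v' x)^2 / (L^2 * (1 + (v x/\<delta>)^2))"
        using d L0 p by (simp add: field_simps power2_eq_square)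
      have e2: "\<delta> / L^2 * (arctan (v x / \<delta>) * v'' x) = \<delta> * arctan (v x / \<delta>) * v'' x / L^2"
        by simp
      show ?thesis unfolding G'_def using e1 e2 by (simp add: distrib_left)
    qed
    ultimately show ?thesis by simp
  qed
  have FTC: "(G' has_integral G B - G A) {A..B}"
    apply (rule fundamental_theorem_of_calculus[OF AB])
    using DG by (simp add: has_real_derivative_iff_has_vector_derivative has_vector_derivative_at_within)
  have "0 \<le> L^2 * M2" using B2[of A] AB by (meson abs_ge_zero atLeastAtMost_iff order.trans order_refl)
  hence M2: "M2 \<ge> 0" using L0 by (simp add: zero_le_mult_iff)
  have pw: "(c/4) * (if x \<in> F then 1 else 0) - pi/2*\<delta>*M2 \<le> G' x" if x: "x \<in> {A..B}" for x
  proof -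
    have t1: "0 \<le> (v' x)^2 / (L^2 * (1 + (v x/\<delta>)^2))" by simp
    have t1F: "c/4 \<le> (v' x)^2 / (L^2 * (1 + (v x/\<delta>)^2))" if "x \<in> F"
    proof -
      have "\<bar>v x\<bar> \<le> \<delta>" using that F_def by auto
      hence vv: "(v x)^2 \<le> \<delta>^2" using d by (metis abs_le_square_iff abs_of_pos)
      hence "(v x/\<delta>)^2 \<le> 1" using d by (simp add: power_divide)
      hence den: "L^2 * (1 + (v x/\<delta>)^2) \<le> 2 * L^2" using L0 by simp
      have "c/2 \<le> (v' x / L)^2" using E[OF x] vv d by linarith
      hence "c/2 \<le> (v' x)^2 / L^2" by (simp add: power_divide)
      hence "c/2 * L^2 \<le> (v' x)^2" using L0 by (simp add: field_simps)
      moreover have "c/4 * (L^2 * (1 + (v x/\<delta>)^2)) \<le> c/4 * (2 * L^2)"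
        using den c by (intro mult_left_mono) auto
      ultimately have "c/4 * (L^2 * (1 + (v x/\<delta>)^2)) \<le> (v' x)^2" by simp
      thus ?thesis using L0 by (simp add: field_simps add_pos_nonneg)
    qed
    have P: "\<bar>arctan (v x / \<delta>)\<bar> * \<bar>v'' x\<bar> \<le> (pi/2) * (L^2 * M2)"
    proof -
      have "\<bar>arctan (v x / \<delta>)\<bar> \<le> pi/2" using arctan_bounded[of "v x / \<delta>"] by linarith
      thus ?thesis using B2[OF x] by (intro mult_mono) auto
    qed
    have "\<bar>\<delta> * arctan (v x / \<delta>) * v'' x / L^2\<bar> = \<delta> * (\<bar>arctan (v x / \<delta>)\<bar> * \<bar>v'' x\<bar>) / L^2"
      using d L0 by (simp add: abs_mult)
    also have "\<dots> \<le> \<delta> * ((pi/2) * (L^2 * M2)) / L^2"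
      using d P by (intro divide_right_mono mult_left_mono) auto
    also have "\<dots> = pi/2*\<delta>*M2" using L0 by simp
    finally have t2: "- (pi/2*\<delta>*M2) \<le> \<delta> * arctan (v x / \<delta>) * v'' x / L^2" by linarith
    show ?thesis
    proof (cases "x \<in> F")
      case True
      have "(c/4) * (if x \<in> F then 1 else 0) = c/4" using True by simp
      thus ?thesis using t1F[OF True] t2 unfolding G'_def by linarith
    next
      case False
      have "(c/4) * (if x \<in> F then 1 else 0) = 0" using False by simp
      thus ?thesis using t1 t2 unfolding G'_def by linarith
    qed
  qed
  have IF: "((\<lambda>x. if x \<in> F then 1 else 0) has_integral measure lebesgue F) {A..B}"
    using has_integral_restrict[OF FAB, of "\<lambda>x. 1::real"] Fm
    by (simp add: lmeasure_integral integrable_integral lmeasurable_iff_integrable_on)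
  have IL: "((\<lambda>x. (c/4) * (if x \<in> F then 1 else 0) - pi/2*\<delta>*M2) has_integral (c/4) * measure lebesgue F - pi/2*\<delta>*M2*(B-A)) {A..B}"
    using has_integral_diff[OF has_integral_mult_right[OF IF, of "c/4"] has_integral_const_real[of "pi/2*\<delta>*M2" A B]] AB
    by (simp add: mult.commute)
  have low: "(c/4) * measure lebesgue F - pi/2*\<delta>*M2*(B-A) \<le> G B - G A"
    by (rule has_integral_le[OF IL FTC pw])
  have Gb: "\<bar>G x\<bar> \<le> \<delta> * pi * M1 / (2*L)" if x: "x \<in> {A..B}" for x
  proof -
    have "\<bar>arctan (v x / \<delta>)\<bar> \<le> pi/2" using arctan_bounded[of "v x / \<delta>"] by linarith
    hence P: "\<bar>arctan (v x / \<delta>)\<bar> * \<bar>v' x\<bar> \<le> (pi/2) * (L * M1)"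
      using B1[OF x] by (intro mult_mono) auto
    have "\<bar>G x\<bar> = \<delta> * (\<bar>arctan (v x / \<delta>)\<bar> * \<bar>v' x\<bar>) / L^2"
      unfolding G_def using d L0 by (simp add: abs_mult)
    also have "\<dots> \<le> \<delta> * ((pi/2) * (L * M1)) / L^2"
      using d P by (intro divide_right_mono mult_left_mono) auto
    also have "\<dots> = \<delta> * pi * M1 / (2*L)" using L0 by (simp add: power2_eq_square field_simps)
    finally show ?thesis .
  qed
  have "G B - G A \<le> pi*\<delta>*M1/L" using Gb[of A] Gb[of B] AB by (simp add: field_simps)
  hence "(c/4) * measure lebesgue F \<le> pi*\<delta>*M1/L + pi/2*\<delta>*M2*(B-A)" using low by linarith
  hence "(4/c) * ((c/4) * measure lebesgue F) \<le> (4/c) * (pi*\<delta>*M1/L + pi/2*\<delta>*M2*(B-A))"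
    using c by (intro mult_left_mono) auto
  hence "measure lebesgue F \<le> (4/c) * (pi*\<delta>*M1/L + pi/2*\<delta>*M2*(B-A))" using c by simp
  thus ?thesis using Fm F_def by simp
qed

lemma two_abs_mult_le: "2 * \<bar>a*b\<bar> \<le> a^2 + (b::real)^2"
proof -
  have "0 \<le> (\<bar>a\<bar> - \<bar>b\<bar>)^2" by simp
  thus ?thesis by (simp add: power2_eq_square algebra_simps abs_mult)
qed

lemma energy:
  fixes u u' :: "real \<Rightarrow> real" and \<alpha> x0 x :: real
  assumes x0: "x0 > 0"
  and D1: "\<And>x. x > 0 \<Longrightarrow> (u has_real_derivative u' x) (at x)"
  and D2: "\<And>x. x > 0 \<Longrightarrow> (u' has_real_derivative (-(1 - \<alpha>/x^2) * u x)) (at x)"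
  and x: "x0 \<le> x"
  shows "((u x0)^2 + (u' x0)^2) * exp(-\<bar>\<alpha>\<bar>/x0) \<le> (u x)^2 + (u' x)^2"
    and "(u x)^2 + (u' x)^2 \<le> ((u x0)^2 + (u' x0)^2) * exp(\<bar>\<alpha>\<bar>/x0)"
proof -
  define V where "V y = (u y)^2 + (u' y)^2" for y
  define V' where "V' y = 2 * u y * u' y * \<alpha> / y^2" for y
  have DV: "(V has_real_derivative V' y) (at y)" if "y > 0" for y
  proof -
    have "(V has_real_derivative 2 * u y * u' y + 2 * u' y * (-(1 - \<alpha>/y^2) * u y)) (at y)"
      unfolding V_def by (auto intro!: derivative_eq_intros D1 D2 that)
    moreover have "2 * u y * u' y + 2 * u' y * (-(1 - \<alpha>/y^2) * u y) = V' y"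
      unfolding V'_def using that by (simp add: field_simps power2_eq_square)
    ultimately show ?thesis by simp
  qed
  have Vb: "\<bar>V' y\<bar> \<le> V y * \<bar>\<alpha>\<bar> / y^2" if "y > 0" for y
  proof -
    have "\<bar>V' y\<bar> = (2 * \<bar>u y * u' y\<bar>) * \<bar>\<alpha>\<bar> / y^2"
      unfolding V'_def using that by (simp add: abs_mult)
    also have "\<dots> \<le> V y * \<bar>\<alpha>\<bar> / y^2" unfolding V_def
      using two_abs_mult_le[of "u y" "u' y"] by (intro divide_right_mono mult_right_mono) auto
    finally show ?thesis .
  qed
  have V0: "V y \<ge> 0" for y unfolding V_def by simp
  define W1 where "W1 y = V y * exp (-\<bar>\<alpha>\<bar>/y)" for y
  define W2 where "W2 y = V y * exp (\<bar>\<alpha>\<bar>/y)" for y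
  have "W1 x0 \<le> W1 x"
  proof (rule DERIV_nonneg_imp_nondecreasing[OF x])
    fix y assume y: "x0 \<le> y" "y \<le> x"
    hence yp: "y > 0" using x0 by simp
    have "(W1 has_real_derivative V' y * exp (-\<bar>\<alpha>\<bar>/y) + V y * (exp (-\<bar>\<alpha>\<bar>/y) * (\<bar>\<alpha>\<bar>/y^2))) (at y)"
      unfolding W1_def using yp by (auto intro!: derivative_eq_intros DV simp: power2_eq_square)
    moreover have "0 \<le> V' y * exp (-\<bar>\<alpha>\<bar>/y) + V y * (exp (-\<bar>\<alpha>\<bar>/y) * (\<bar>\<alpha>\<bar>/y^2))"
    proof -
      have "0 \<le> V' y + V y * \<bar>\<alpha>\<bar>/y^2" using Vb[OF yp] by linarith
      hence "0 \<le> (V' y + V y * \<bar>\<alpha>\<bar>/y^2) * exp (-\<bar>\<alpha>\<bar>/y)" by simp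
      thus ?thesis by (simp add: algebra_simps)
    qed
    ultimately show "\<exists>d. (W1 has_real_derivative d) (at y) \<and> 0 \<le> d" by blast
  qed
  moreover have "W1 x \<le> V x" unfolding W1_def using V0[of x] x0 x
    by (intro mult_left_le) auto
  ultimately show "((u x0)^2 + (u' x0)^2) * exp(-\<bar>\<alpha>\<bar>/x0) \<le> (u x)^2 + (u' x)^2"
    unfolding W1_def V_def by simp
  have "W2 x \<le> W2 x0"
  proof (rule DERIV_nonpos_imp_nonincreasing[OF x])
    fix y assume y: "x0 \<le> y" "y \<le> x"
    hence yp: "y > 0" using x0 by simp
    have "(W2 has_real_derivative V' y * exp (\<bar>\<alpha>\<bar>/y) + V y * (exp (\<bar>\<alpha>\<bar>/y) * (-\<bar>\<alpha>\<bar>/y^2))) (at y)"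
      unfolding W2_def using yp by (auto intro!: derivative_eq_intros DV simp: power2_eq_square)
    moreover have "V' y * exp (\<bar>\<alpha>\<bar>/y) + V y * (exp (\<bar>\<alpha>\<bar>/y) * (-\<bar>\<alpha>\<bar>/y^2)) \<le> 0"
    proof -
      have "V' y - V y * \<bar>\<alpha>\<bar>/y^2 \<le> 0" using Vb[OF yp] by linarith
      hence "(V' y - V y * \<bar>\<alpha>\<bar>/y^2) * exp (\<bar>\<alpha>\<bar>/y) \<le> 0" by (simp add: mult_nonpos_nonneg)
      thus ?thesis by (simp add: algebra_simps)
    qed
    ultimately show "\<exists>d. (W2 has_real_derivative d) (at y) \<and> d \<le> 0" by blast
  qed
  moreover have "V x \<le> W2 x" unfolding W2_def using V0[of x] x0 x
    by (intro mult_le_cancel_left1[THEN iffD2]) auto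
  moreover have "W2 x0 = ((u x0)^2 + (u' x0)^2) * exp(\<bar>\<alpha>\<bar>/x0)" unfolding W2_def V_def by simp
  ultimately show "(u x)^2 + (u' x)^2 \<le> ((u x0)^2 + (u' x0)^2) * exp(\<bar>\<alpha>\<bar>/x0)"
    unfolding V_def by linarith
qed

definition bc :: "real \<Rightarrow> nat \<Rightarrow> real" where
  "bc \<nu> m = (-1)^m / (fact m * Gamma (real m + \<nu> + 1))"
definition bS :: "real \<Rightarrow> real \<Rightarrow> real" where
  "bS \<nu> y = (\<Sum>m. bc \<nu> m * y^m)"
definition bS1 :: "real \<Rightarrow> real \<Rightarrow> real" where
  "bS1 \<nu> y = (\<Sum>m. diffs (bc \<nu>) m * y^m)"
definition bS2 :: "real \<Rightarrow> real \<Rightarrow> real" where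
  "bS2 \<nu> y = (\<Sum>m. diffs (diffs (bc \<nu>)) m * y^m)"

lemma bc_rec:
  assumes "\<nu> \<ge> 0"
  shows "bc \<nu> (Suc n) = - bc \<nu> n / ((real n + 1) * (real n + \<nu> + 1))"
proof -
  have z: "real n + \<nu> + 1 > 0" using assms by simp
  hence "real n + \<nu> + 1 \<notin> \<int>\<^sub>\<le>\<^sub>0" by (auto elim!: nonpos_Ints_cases)
  hence G: "Gamma (real (Suc n) + \<nu> + 1) = (real n + \<nu> + 1) * Gamma (real n + \<nu> + 1)"
    using Gamma_plus1[of "real n + \<nu> + 1"] by (simp add: add_ac)
  have Gp: "Gamma (real n + \<nu> + 1) > 0" using z by (rule Gamma_real_pos)
  show ?thesis unfolding bc_def G using z Gp
    by (simp add: field_simps)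
qed

lemma bc_summable:
  assumes "\<nu> \<ge> 0"
  shows "summable (\<lambda>m. bc \<nu> m * y^m)"
proof (rule summable_ratio_test[where c="1/2" and N="nat \<lceil>2 * \<bar>y\<bar>\<rceil>"])
  fix n assume n: "nat \<lceil>2 * \<bar>y\<bar>\<rceil> \<le> n"
  hence ny: "2 * \<bar>y\<bar> \<le> real n" by linarith
  have pos: "(real n + 1) * (real n + \<nu> + 1) > 0" using assms by (simp add: add_pos_nonneg)
  have le: "real n + 1 \<le> (real n + 1) * (real n + \<nu> + 1)" using assms by (simp add: algebra_simps)
  have "norm (bc \<nu> (Suc n) * y ^ Suc n) = \<bar>y\<bar> / ((real n + 1) * (real n + \<nu> + 1)) * norm (bc \<nu> n * y ^ n)"
    unfolding bc_rec[OF assms] using pos by (simp add: abs_mult field_simps)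
  also have "\<dots> \<le> 1/2 * norm (bc \<nu> n * y ^ n)"
  proof (rule mult_right_mono)
    have "\<bar>y\<bar> \<le> 1/2 * ((real n + 1) * (real n + \<nu> + 1))" using ny le by linarith
    thus "\<bar>y\<bar> / ((real n + 1) * (real n + \<nu> + 1)) \<le> 1/2" using pos by (simp add: divide_le_eq)
  qed simp
  finally show "norm (bc \<nu> (Suc n) * y ^ Suc n) \<le> 1/2 * norm (bc \<nu> n * y ^ n)" .
qed simp

lemma bc1_summable: "\<nu> \<ge> 0 \<Longrightarrow> summable (\<lambda>m. diffs (bc \<nu>) m * y^m)"
  by (rule termdiff_converges_all) (rule bc_summable)
lemma bc2_summable: "\<nu> \<ge> 0 \<Longrightarrow> summable (\<lambda>m. diffs (diffs (bc \<nu>)) m * y^m)"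
  by (rule termdiff_converges_all) (rule bc1_summable)

lemma bS_deriv: "\<nu> \<ge> 0 \<Longrightarrow> (bS \<nu> has_real_derivative bS1 \<nu> y) (at y)"
  unfolding bS_def bS1_def by (rule termdiffs_strong_converges_everywhere) (rule bc_summable)
lemma bS1_deriv: "\<nu> \<ge> 0 \<Longrightarrow> (bS1 \<nu> has_real_derivative bS2 \<nu> y) (at y)"
  unfolding bS2_def bS1_def by (rule termdiffs_strong_converges_everywhere) (rule bc1_summable)

lemma bS_ode:
  assumes nu: "\<nu> \<ge> 0"
  shows "y * bS2 \<nu> y + (\<nu> + 1) * bS1 \<nu> y + bS \<nu> y = 0"
proof -
  let ?d = "diffs (bc \<nu>)" and ?dd = "diffs (diffs (bc \<nu>))"
  have "(\<lambda>n. ?dd n * y^n * y) sums (bS2 \<nu> y * y)"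
    unfolding bS2_def by (intro sums_mult2 summable_sums bc2_summable nu)
  hence "(\<lambda>n. (\<lambda>n. real n * ?d n * y^n) (Suc n)) sums (bS2 \<nu> y * y)"
    by (simp add: diffs_def mult_ac)
  hence s1: "(\<lambda>n. real n * ?d n * y^n) sums (y * bS2 \<nu> y)"
    by (subst (asm) sums_Suc_iff) (simp add: mult.commute)
  have s2: "(\<lambda>n. (\<nu> + 1) * (?d n * y^n)) sums ((\<nu> + 1) * bS1 \<nu> y)"
    unfolding bS1_def by (intro sums_mult summable_sums bc1_summable nu)
  have s3: "(\<lambda>n. bc \<nu> n * y^n) sums (bS \<nu> y)"
    unfolding bS_def by (intro summable_sums bc_summable nu)
  have "(\<lambda>n. real n * ?d n * y^n + (\<nu> + 1) * (?d n * y^n) + bc \<nu> n * y^n) sums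
        (y * bS2 \<nu> y + (\<nu> + 1) * bS1 \<nu> y + bS \<nu> y)"
    by (intro sums_add s1 s2 s3)
  moreover have "(\<lambda>n. real n * ?d n * y^n + (\<nu> + 1) * (?d n * y^n) + bc \<nu> n * y^n) = (\<lambda>n. 0)"
  proof
    fix n
    have pos: "(real n + 1) * (real n + \<nu> + 1) > 0" using nu by (simp add: add_pos_nonneg)
    have p2: "real n + \<nu> + 1 > 0" using nu by simp
    have dn: "?d n = - bc \<nu> n / (real n + \<nu> + 1)"
    proof -
      have "?d n = (real n + 1) * (- bc \<nu> n) / ((real n + 1) * (real n + \<nu> + 1))"
        unfolding diffs_def bc_rec[OF nu] by (simp add: add.commute)
      also have "\<dots> = - bc \<nu> n / (real n + \<nu> + 1)"
        by (rule nonzero_mult_divide_mult_cancel_left) simp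
      finally show ?thesis .
    qed
    have "real n * ?d n + (\<nu> + 1) * ?d n + bc \<nu> n = (real n + \<nu> + 1) * ?d n + bc \<nu> n"
      by (simp add: algebra_simps)
    also have "\<dots> = 0" unfolding dn using p2 by simp
    finally have "real n * ?d n + (\<nu> + 1) * ?d n + bc \<nu> n = 0" .
    thus "real n * ?d n * y^n + (\<nu> + 1) * (?d n * y^n) + bc \<nu> n * y^n = 0"
      by (metis distrib_right mult.assoc mult_zero_left)
  qed
  ultimately show ?thesis by (simp add: sums_0 sums_unique2)
qed

lemma bessel_J_bS: "\<nu> \<ge> 0 \<Longrightarrow> bessel_J \<nu> x = (x/2) powr \<nu> * bS \<nu> ((x/2)^2)"
proof -
  assume nu: "\<nu> \<ge> 0"
  have "bessel_J \<nu> x = (\<Sum>m. bc \<nu> m * ((x/2)^2)^m * (x/2) powr \<nu>)"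
    unfolding bessel_J_def bc_def by (simp add: power_mult)
  also have "\<dots> = bS \<nu> ((x/2)^2) * (x/2) powr \<nu>"
    unfolding bS_def by (rule suminf_mult2[symmetric]) (rule bc_summable[OF nu])
  finally show ?thesis by simp
qed

lemma bS_pos_somewhere:
  assumes nu: "\<nu> \<ge> 0"
  shows "\<exists>y>0. bS \<nu> y \<noteq> 0"
proof -
  have c: "isCont (bS \<nu>) 0" unfolding bS_def
    by (rule isCont_powser_converges_everywhere) (rule bc_summable[OF nu])
  have "bS \<nu> 0 = bc \<nu> 0" unfolding bS_def by (simp add: powser_zero)
  also have "\<dots> > 0" unfolding bc_def using nu by (simp add: Gamma_real_pos add_pos_nonneg)
  finally have "bS \<nu> 0 > 0" .
  then obtain d where d: "d > 0" "\<And>y. \<bar>y - 0\<bar> < d \<Longrightarrow> \<bar>bS \<nu> y - bS \<nu> 0\<bar> < bS \<nu> 0"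
    using c unfolding continuous_at_eps_delta dist_real_def by blast
  have "\<bar>bS \<nu> (d/2) - bS \<nu> 0\<bar> < bS \<nu> 0" using d by simp
  hence "bS \<nu> (d/2) \<noteq> 0" by auto
  thus ?thesis using d by (intro exI[of _ "d/2"]) auto
qed

definition bu :: "real \<Rightarrow> real \<Rightarrow> real" where
  "bu \<nu> x = x powr (\<nu> + 1/2) * bS \<nu> ((x/2)^2)"
definition bu1 :: "real \<Rightarrow> real \<Rightarrow> real" where
  "bu1 \<nu> x = (\<nu> + 1/2) * x powr (\<nu> + 1/2 - 1) * bS \<nu> ((x/2)^2)
              + x powr (\<nu> + 1/2) * (x/2) * bS1 \<nu> ((x/2)^2)"

lemma chainS:
  assumes "\<nu> \<ge> 0"
  shows "((\<lambda>x. bS \<nu> ((x/2)^2)) has_real_derivative bS1 \<nu> ((x/2)^2) * (x/2)) (at x)"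
    and "((\<lambda>x. bS1 \<nu> ((x/2)^2)) has_real_derivative bS2 \<nu> ((x/2)^2) * (x/2)) (at x)"
proof -
  have q: "((\<lambda>x::real. (x/2)^2) has_real_derivative (x/2)) (at x)"
    by (auto intro!: derivative_eq_intros)
  show "((\<lambda>x. bS \<nu> ((x/2)^2)) has_real_derivative bS1 \<nu> ((x/2)^2) * (x/2)) (at x)"
    by (rule DERIV_chain2[OF bS_deriv[OF assms] q])
  show "((\<lambda>x. bS1 \<nu> ((x/2)^2)) has_real_derivative bS2 \<nu> ((x/2)^2) * (x/2)) (at x)"
    by (rule DERIV_chain2[OF bS1_deriv[OF assms] q])
qed

lemma bu_deriv:
  assumes "\<nu> \<ge> 0" "x > 0"
  shows "(bu \<nu> has_real_derivative bu1 \<nu> x) (at x)"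
  unfolding bu_def bu1_def
  by (auto intro!: derivative_eq_intros chainS[OF assms(1)] has_real_derivative_powr assms(2)
           simp: algebra_simps)

lemma bu1_deriv:
  assumes nu: "\<nu> \<ge> 0" and x: "x > 0"
  shows "(bu1 \<nu> has_real_derivative (-(1 - ((\<nu> + 1/2) * (\<nu> - 1/2))/x^2) * bu \<nu> x)) (at x)"
proof -
  define p where "p = \<nu> + 1/2"
  define S where "S = bS \<nu> ((x/2)^2)"
  define S1 where "S1 = bS1 \<nu> ((x/2)^2)"
  define S2 where "S2 = bS2 \<nu> ((x/2)^2)"
  define P where "P = x powr p"
  have D: "(bu1 \<nu> has_real_derivative
     p * ((p - 1) * x powr (p - 1 - 1) * S + x powr (p - 1) * (S1 * (x/2)))
     + ((p * x powr (p - 1) * (x/2) + x powr p * (1/2)) * S1 + x powr p * (x/2) * (S2 * (x/2)))) (at x)"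
    unfolding bu1_def p_def[symmetric] S_def S1_def S2_def
    by (auto intro!: derivative_eq_intros chainS[OF nu] has_real_derivative_powr x simp: algebra_simps) (simp add: field_simps)
  have e1: "x powr (p - 1) = P / x" unfolding P_def using x by (simp add: powr_diff)
  have e2: "x powr (p - 1 - 1) = P / x^2" unfolding P_def using x
    by (simp add: powr_diff power2_eq_square)
  have ode: "(x/2)^2 * S2 = - (\<nu> + 1) * S1 - S"
    using bS_ode[OF nu, of "(x/2)^2"] unfolding S_def S1_def S2_def by linarith
  have ode': "x^2 * S2 = 4 * (- (\<nu> + 1) * S1 - S)" using ode by (simp add: power_divide)
  have "p * ((p - 1) * x powr (p - 1 - 1) * S + x powr (p - 1) * (S1 * (x/2)))
     + ((p * x powr (p - 1) * (x/2) + x powr p * (1/2)) * S1 + x powr p * (x/2) * (S2 * (x/2)))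
     = p * (p - 1) * P * S / x^2 + P * S1 * (p + 1/2) + P * (x^2 * S2) / 4"
    unfolding e1 e2 P_def[symmetric] using x by (simp add: field_simps power2_eq_square)
  also have "\<dots> = -(1 - ((\<nu> + 1/2) * (\<nu> - 1/2))/x^2) * bu \<nu> x"
  proof -
    have bu: "bu \<nu> x = P * S" by (simp add: bu_def P_def p_def S_def)
    show ?thesis unfolding ode' bu p_def using x
      by (simp add: field_simps power2_eq_square)
  qed
  finally show ?thesis using D by simp
qed

lemma bu_bessel:
  assumes nu: "\<nu> \<ge> 0" and x: "x > 0"
  shows "\<bar>bu \<nu> x\<bar> = 2 powr \<nu> * sqrt x * \<bar>bessel_J \<nu> x\<bar>"
proof -
  have "bu \<nu> x = x powr \<nu> * sqrt x * bS \<nu> ((x/2)^2)"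
    unfolding bu_def using x by (simp add: powr_add powr_half_sqrt)
  moreover have "bessel_J \<nu> x = x powr \<nu> / 2 powr \<nu> * bS \<nu> ((x/2)^2)"
    unfolding bessel_J_bS[OF nu] using x by (simp add: powr_divide)
  ultimately show ?thesis using x by (simp add: abs_mult)
qed

lemma bu_cont: "\<nu> \<ge> 0 \<Longrightarrow> 0 < t \<Longrightarrow> 0 < a \<Longrightarrow> continuous_on {a..b} (\<lambda>r. bu \<nu> (r * t))"
proof -
  assume nu: "\<nu> \<ge> 0" and t: "0 < t" and a: "0 < a"
  have "isCont (\<lambda>r. bu \<nu> (r * t)) r" if "r \<in> {a..b}" for r
  proof -
    have "r * t > 0" using that a t by simp
    hence c2: "isCont (bu \<nu>) (r * t)" using bu_deriv[OF nu] DERIV_isCont by blast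
    have "isCont (\<lambda>r. r * t) r" by simp
    thus ?thesis using c2 by (rule isCont_o2)
  qed
  thus ?thesis by (simp add: continuous_at_imp_continuous_on)
qed

lemma nullk:
  fixes \<tau> :: "nat \<Rightarrow> real" and \<nu> :: real
  assumes tp: "\<And>n. \<tau> n > 0" and tl: "filterlim \<tau> at_top sequentially" and nu: "\<nu> \<ge> 0"
  shows "{r. 0 < r \<and> (\<lambda>n. sqrt (\<tau> n) * \<bar>bessel_J \<nu> (r * \<tau> n)\<bar>) \<longlonglongrightarrow> 0} \<in> null_sets lebesgue"
proof -
  define N where "N = {r. 0 < r \<and> (\<lambda>n. sqrt (\<tau> n) * \<bar>bessel_J \<nu> (r * \<tau> n)\<bar>) \<longlonglongrightarrow> 0}"
  obtain y where y: "y > 0" "bS \<nu> y \<noteq> 0" using bS_pos_somewhere[OF nu] by blast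
  define x0 where "x0 = 2 * sqrt y"
  have x0: "x0 > 0" unfolding x0_def using y by simp
  have "(x0/2)^2 = y" unfolding x0_def using y by simp
  hence "bu \<nu> x0 \<noteq> 0" unfolding bu_def using y x0 by simp
  define \<alpha> where "\<alpha> = (\<nu> + 1/2) * (\<nu> - 1/2)"
  define V0 where "V0 = (bu \<nu> x0)^2 + (bu1 \<nu> x0)^2"
  have V0: "V0 > 0" unfolding V0_def using \<open>bu \<nu> x0 \<noteq> 0\<close> by (simp add: add_pos_nonneg)
  define c where "c = V0 * exp (-\<bar>\<alpha>\<bar>/x0)"
  define Cv where "Cv = V0 * exp (\<bar>\<alpha>\<bar>/x0)"
  define M1 where "M1 = sqrt Cv"
  define M2 where "M2 = (1 + \<bar>\<alpha>\<bar>/x0^2) * M1"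
  have c: "c > 0" unfolding c_def using V0 by simp
  have M1: "M1 \<ge> 0" unfolding M1_def Cv_def using V0 by simp
  have M2: "M2 \<ge> 0" unfolding M2_def using M1 by simp
  have D1: "\<And>x. x > 0 \<Longrightarrow> (bu \<nu> has_real_derivative bu1 \<nu> x) (at x)"
    using bu_deriv[OF nu] by blast
  have D2: "\<And>x. x > 0 \<Longrightarrow> (bu1 \<nu> has_real_derivative (-(1 - \<alpha>/x^2) * bu \<nu> x)) (at x)"
    using bu1_deriv[OF nu] unfolding \<alpha>_def by blast
  have Vlow: "c \<le> (bu \<nu> x)^2 + (bu1 \<nu> x)^2" if "x0 \<le> x" for x
    using energy(1)[OF x0 D1 D2 that] unfolding c_def V0_def .
  have Vup: "(bu \<nu> x)^2 + (bu1 \<nu> x)^2 \<le> Cv" if "x0 \<le> x" for x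
    using energy(2)[OF x0 D1 D2 that] unfolding Cv_def V0_def .
  have bnd0: "\<bar>bu \<nu> x\<bar> \<le> M1" if "x0 \<le> x" for x
  proof -
    have "\<bar>bu \<nu> x\<bar>^2 \<le> Cv" using Vup[OF that] zero_le_power2[of "bu1 \<nu> x"] unfolding power2_abs by linarith
    thus ?thesis unfolding M1_def by (rule real_le_rsqrt)
  qed
  have bnd1: "\<bar>bu1 \<nu> x\<bar> \<le> M1" if "x0 \<le> x" for x
  proof -
    have "\<bar>bu1 \<nu> x\<bar>^2 \<le> Cv" using Vup[OF that] zero_le_power2[of "bu \<nu> x"] unfolding power2_abs by linarith
    thus ?thesis unfolding M1_def by (rule real_le_rsqrt)
  qed
  have bnd2: "\<bar>-(1 - \<alpha>/x^2) * bu \<nu> x\<bar> \<le> M2" if x: "x0 \<le> x" for x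
  proof -
    have xp: "x > 0" using x x0 by simp
    have "\<bar>\<alpha>/x^2\<bar> = \<bar>\<alpha>\<bar>/x^2" by (simp add: abs_divide)
    also have "\<dots> \<le> \<bar>\<alpha>\<bar>/x0^2" using x x0 by (intro divide_left_mono power_mono mult_pos_pos) auto
    finally have "\<bar>1 - \<alpha>/x^2\<bar> \<le> 1 + \<bar>\<alpha>\<bar>/x0^2" by linarith
    hence "\<bar>1 - \<alpha>/x^2\<bar> * \<bar>bu \<nu> x\<bar> \<le> (1 + \<bar>\<alpha>\<bar>/x0^2) * M1"
      using bnd0[OF x] by (intro mult_mono) auto
    thus ?thesis unfolding M2_def by (simp add: abs_mult abs_minus_commute)
  qed
  have main: "N \<inter> {a..b} \<in> null_sets lebesgue" if ab: "0 < a" "a \<le> b" for a b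
  proof -
    define K where "K = (4/c) * (pi*M1 + pi/2*M2*(b-a))"
    have K: "K \<ge> 0" unfolding K_def using c M1 M2 ab by simp
    have "negligible (N \<inter> {a..b})"
      unfolding negligible_outer_le
    proof (intro allI impI)
      fix e :: real assume e: "e > 0"
      define \<delta> where "\<delta> = min (e/(K+1)) (sqrt (c/2))"
      have d0: "\<delta> > 0" unfolding \<delta>_def using e K c by simp
      have d2: "\<delta>^2 \<le> c/2"
      proof -
        have "\<delta> \<le> sqrt (c/2)" unfolding \<delta>_def by simp
        hence "\<delta>^2 \<le> (sqrt (c/2))^2" using d0 by (intro power_mono) auto
        thus ?thesis using c by simp
      qed
      have dK: "\<delta> * K \<le> e"
      proof -
        have "\<delta> \<le> e/(K+1)" unfolding \<delta>_def by simp
        hence "\<delta> * (K+1) \<le> e" using K by (simp add: le_divide_eq)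
        thus ?thesis using d0 by (simp add: algebra_simps)
      qed
      define Y where "Y M = {r\<in>{a..b}. \<forall>n\<ge>M. \<bar>bu \<nu> (r * \<tau> n)\<bar> \<le> \<delta>}" for M
      have Yclosed: "closed (Y M)" for M
      proof -
        define S where "S n = {a..b} \<inter> (\<lambda>r. bu \<nu> (r * \<tau> n)) -` {-\<delta>..\<delta>}" for n
        have eq: "Y M = {a..b} \<inter> (\<Inter>n\<in>{M..}. S n)"
          unfolding Y_def S_def by (auto simp: abs_le_iff)
        have cl: "closed (S n)" for n unfolding S_def
          by (rule continuous_closed_preimage[OF bu_cont[OF nu tp ab(1)]]) auto
        have "closed (\<Inter>n\<in>{M..}. S n)" using cl by (intro closed_INT) auto
        hence "closed ({a..b} \<inter> (\<Inter>n\<in>{M..}. S n))" by (intro closed_Int) auto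
        thus ?thesis using eq by simp
      qed
      have Yfm: "Y M \<in> lmeasurable" for M
      proof -
        have "bounded (Y M)" unfolding Y_def by (rule bounded_subset[of "{a..b}"]) auto
        thus ?thesis using Yclosed by (intro lmeasurable_compact) (simp add: compact_eq_bounded_closed)
      qed
      have Ymeas: "measure lebesgue (Y M) \<le> \<delta> * K" for M
      proof -
        have "\<forall>\<^sub>F n in sequentially. max 1 (x0/a) \<le> \<tau> n"
          using tl unfolding filterlim_at_top by blast
        then obtain M' where M': "\<And>n. n \<ge> M' \<Longrightarrow> max 1 (x0/a) \<le> \<tau> n"
          unfolding eventually_sequentially by blast
        define n where "n = max M M'"
        have nM: "n \<ge> M" unfolding n_def by simp
        have tn: "max 1 (x0/a) \<le> \<tau> n" using M' unfolding n_def by simp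
        define t where "t = \<tau> n"
        have t1: "t \<ge> 1" using tn unfolding t_def by simp
        have tx: "a * t \<ge> x0" using tn ab unfolding t_def by (simp add: field_simps)
        have tp': "t > 0" using t1 by simp
        define v where "v r = bu \<nu> (r * t)" for r
        define v' where "v' r = t * bu1 \<nu> (r * t)" for r
        define v'' where "v'' r = t^2 * (-(1 - \<alpha>/(r*t)^2) * bu \<nu> (r * t))" for r
        have rt: "r * t \<ge> x0" if "r \<in> {a..b}" for r
          using that tx tp' by (smt (verit, best) atLeastAtMost_iff mult_right_mono)
        have rtp: "r * t > 0" if "r \<in> {a..b}" for r using rt[OF that] x0 by simp
        have SL: "{x\<in>{a..b}. \<bar>v x\<bar> \<le> \<delta>} \<in> lmeasurable \<and>
            measure lebesgue {x\<in>{a..b}. \<bar>v x\<bar> \<le> \<delta>} \<le> (4/c) * (pi*\<delta>*M1/t + pi/2*\<delta>*M2*(b-a))"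
        proof (rule sublevel[OF ab(2) t1 c d0 d2])
          fix r assume r: "r \<in> {a..b}"
          show "(v has_real_derivative v' r) (at r)"
          proof -
            have "((\<lambda>r. bu \<nu> (r * t)) has_real_derivative bu1 \<nu> (r * t) * t) (at r)"
              by (rule DERIV_chain2[where g="\<lambda>r. r * t", OF D1[OF rtp[OF r]]]) (auto intro!: derivative_eq_intros)
            thus ?thesis unfolding v_def v'_def by (simp add: mult.commute)
          qed
          show "(v' has_real_derivative v'' r) (at r)"
          proof -
            have "((\<lambda>r. bu1 \<nu> (r * t)) has_real_derivative (-(1 - \<alpha>/(r*t)^2) * bu \<nu> (r*t)) * t) (at r)"
              by (rule DERIV_chain2[where g="\<lambda>r. r * t", OF D2[OF rtp[OF r]]]) (auto intro!: derivative_eq_intros)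
            from DERIV_cmult[OF this, of t] show ?thesis
              unfolding v'_def v''_def by (simp add: power2_eq_square mult_ac)
          qed
          show "c \<le> (v r)^2 + (v' r / t)^2"
            unfolding v_def v'_def using Vlow[OF rt[OF r]] tp' by simp
          show "\<bar>v' r\<bar> \<le> t * M1"
            unfolding v'_def using bnd1[OF rt[OF r]] tp' by (simp add: abs_mult)
          show "\<bar>v'' r\<bar> \<le> t^2 * M2"
            unfolding v''_def using bnd2[OF rt[OF r]] tp' by (simp add: abs_mult mult_left_mono)
        qed
        have sub: "Y M \<subseteq> {x\<in>{a..b}. \<bar>v x\<bar> \<le> \<delta>}"
          unfolding Y_def v_def t_def using nM by auto
        have "measure lebesgue (Y M) \<le> measure lebesgue {x\<in>{a..b}. \<bar>v x\<bar> \<le> \<delta>}"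
          using SL sub Yfm by (intro measure_mono_fmeasurable) (auto simp: fmeasurableD)
        also have "\<dots> \<le> (4/c) * (pi*\<delta>*M1/t + pi/2*\<delta>*M2*(b-a))" using SL by simp
        also have "\<dots> \<le> (4/c) * (pi*\<delta>*M1 + pi/2*\<delta>*M2*(b-a))"
        proof -
          have "0 \<le> pi*\<delta>*M1" using d0 M1 by simp
          hence "pi*\<delta>*M1/t \<le> pi*\<delta>*M1" using t1 by (simp add: divide_le_eq mult_le_cancel_left1)
          thus ?thesis using c by (intro mult_left_mono) auto
        qed
        also have "\<dots> = \<delta> * K" unfolding K_def by (simp add: algebra_simps)
        finally show ?thesis .
      qed
      have Yinc: "Y m \<subseteq> Y n" if "m \<le> n" for m n using that unfolding Y_def by auto
      define T where "T = (\<Union>M. Y M)"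
      have Tle: "measure lebesgue T \<le> \<delta> * K"
        unfolding T_def
      proof (rule measure_countable_Union_le[OF Yfm])
        fix n
        have "(\<Union>M\<in>{..n}. Y M) = Y n" using Yinc by auto
        thus "measure lebesgue (\<Union>M\<in>{..n}. Y M) \<le> \<delta> * K" using Ymeas by simp
      qed
      have Tfm: "T \<in> lmeasurable"
      proof (rule fmeasurableI2[of "{a..b}"])
        show "{a..b} \<in> lmeasurable" by simp
        show "T \<subseteq> {a..b}" unfolding T_def Y_def by auto
        show "T \<in> sets lebesgue" unfolding T_def using Yfm by (auto simp: fmeasurableD)
      qed
      have NT: "N \<inter> {a..b} \<subseteq> T"
      proof
        fix r assume r: "r \<in> N \<inter> {a..b}"
        hence rp: "r > 0" and lim: "(\<lambda>n. sqrt (\<tau> n) * \<bar>bessel_J \<nu> (r * \<tau> n)\<bar>) \<longlonglongrightarrow> 0"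
          unfolding N_def by auto
        define \<eta> where "\<eta> = \<delta> / (2 powr \<nu> * sqrt b)"
        have bp: "b > 0" using ab by simp
        have eta: "\<eta> > 0" unfolding \<eta>_def using d0 bp by simp
        obtain M where M: "\<And>n. n \<ge> M \<Longrightarrow> \<bar>sqrt (\<tau> n) * \<bar>bessel_J \<nu> (r * \<tau> n)\<bar> - 0\<bar> < \<eta>"
          using lim eta unfolding LIMSEQ_def dist_real_def by blast
        have "\<bar>bu \<nu> (r * \<tau> n)\<bar> \<le> \<delta>" if n: "n \<ge> M" for n
        proof -
          have rt: "r * \<tau> n > 0" using rp tp[of n] by simp
          have "\<bar>bu \<nu> (r * \<tau> n)\<bar> = 2 powr \<nu> * sqrt r * (sqrt (\<tau> n) * \<bar>bessel_J \<nu> (r * \<tau> n)\<bar>)"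
            unfolding bu_bessel[OF nu rt] by (simp add: real_sqrt_mult mult_ac)
          also have "\<dots> \<le> 2 powr \<nu> * sqrt b * \<eta>"
          proof -
            have h2: "sqrt (\<tau> n) * \<bar>bessel_J \<nu> (r * \<tau> n)\<bar> \<le> \<eta>" using M[OF n] by simp
            have "sqrt r \<le> sqrt b" using r by auto
            hence h1: "2 powr \<nu> * sqrt r \<le> 2 powr \<nu> * sqrt b" by simp
            show ?thesis using mult_mono[OF h1 h2] rp bp tp[of n] by simp
          qed
          also have "\<dots> = \<delta>" unfolding \<eta>_def using bp by simp
          finally show ?thesis .
        qed
        hence "r \<in> Y M" unfolding Y_def using r by auto
        thus "r \<in> T" unfolding T_def by auto
      qed
      show "\<exists>T. N \<inter> {a..b} \<subseteq> T \<and> T \<in> lmeasurable \<and> measure lebesgue T \<le> e"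
        using NT Tfm Tle dK by (intro exI[of _ T]) auto
    qed
    thus ?thesis by (simp add: negligible_iff_null_sets)
  qed
  have A: "N \<subseteq> (\<Union>j. N \<inter> {1/(real j + 1)..real j + 1})"
  proof
    fix r assume r: "r \<in> N"
    hence rp: "r > 0" unfolding N_def by simp
    obtain j :: nat where j: "max r (1/r) \<le> real j" using real_arch_simple by blast
    have "1/(real j + 1) \<le> r"
    proof -
      have "1/r \<le> real j + 1" using j by simp
      hence "1 \<le> r * (real j + 1)" using rp by (simp add: divide_le_eq mult.commute)
      thus ?thesis using rp by (simp add: divide_le_eq mult.commute)
    qed
    moreover have "r \<le> real j + 1" using j by simp
    ultimately have "r \<in> N \<inter> {1/(real j + 1)..real j + 1}" using r by simp
    thus "r \<in> (\<Union>j. N \<inter> {1/(real j + 1)..real j + 1})" by (rule UN_I[rotated]) simp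
  qed
  have B: "(\<Union>j. N \<inter> {1/(real j + 1)..real j + 1}) \<in> null_sets lebesgue"
  proof (intro null_sets_UN main)
    fix j :: nat
    have "1/(real j + 1) \<le> 1" by simp
    also have "1 \<le> real j + 1" by simp
    finally show "1/(real j + 1) \<le> real j + 1" .
  qed simp
  have "negligible (\<Union>j. N \<inter> {1/(real j + 1)..real j + 1})" using B by (simp add: negligible_iff_null_sets)
  hence "negligible N" using A by (rule negligible_subset)
  thus ?thesis by (simp add: negligible_iff_null_sets N_def)
qed

theorem lemmaA8:
  fixes \<tau> :: "nat \<Rightarrow> real" and g :: "real \<Rightarrow> real"
  assumes "\<And>n. \<tau> n > 0"
    and "filterlim \<tau> at_top sequentially"
    and "\<And>t. t > 0 \<Longrightarrow> g t > 0"
    and "filterlim g at_top at_top"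
  shows "\<exists>E. E \<subseteq> {0<..} \<and> E \<in> sets lebesgue \<and> {0<..} - E \<in> null_sets lebesgue \<and>
           (\<forall>r\<in>E. \<forall>k::nat.
              limsup (\<lambda>n. ereal (sqrt (\<tau> n) * \<bar>bessel_J (real k / 2) (r * \<tau> n)\<bar> * g (\<tau> n))) = \<infinity>)"
proof -
  note tp = assms(1) and tl = assms(2) and gp = assms(3) and gl = assms(4)
  define N where "N k = {r. 0 < r \<and> (\<lambda>n. sqrt (\<tau> n) * \<bar>bessel_J (real k / 2) (r * \<tau> n)\<bar>) \<longlonglongrightarrow> 0}" for k :: nat
  have Nn: "N k \<in> null_sets lebesgue" for k
    unfolding N_def by (rule nullk[OF tp tl]) simp
  have UN: "(\<Union>k. N k) \<in> null_sets lebesgue" using Nn by (rule null_sets_UN)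
  define E where "E = {0<..} - (\<Union>k. N k)"
  have "E \<subseteq> {0<..}" unfolding E_def by auto
  moreover have "E \<in> sets lebesgue"
    unfolding E_def using UN by (intro sets.Diff) (auto simp: null_setsD2)
  moreover have "{0<..} - E \<in> null_sets lebesgue"
  proof -
    have "{0<..} - E \<subseteq> (\<Union>k. N k)" unfolding E_def by auto
    moreover have "negligible (\<Union>k. N k)" using UN by (simp add: negligible_iff_null_sets)
    ultimately have "negligible ({0<..} - E)" using negligible_subset by blast
    thus ?thesis by (simp add: negligible_iff_null_sets)
  qed
  moreover have "limsup (\<lambda>n. ereal (sqrt (\<tau> n) * \<bar>bessel_J (real k / 2) (r * \<tau> n)\<bar> * g (\<tau> n))) = \<infinity>"
    if r: "r \<in> E" for r k
  proof -
    define f where "f n = sqrt (\<tau> n) * \<bar>bessel_J (real k / 2) (r * \<tau> n)\<bar>" for n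
    have rp: "r > 0" and rN: "r \<notin> N k" using r unfolding E_def by auto
    hence nl: "\<not> f \<longlonglongrightarrow> 0" unfolding N_def f_def by auto
    have f0: "f n \<ge> 0" for n unfolding f_def using tp[of n] by simp
    obtain \<epsilon> where eps: "\<epsilon> > 0" and freq: "\<And>M. \<exists>n\<ge>M. f n \<ge> \<epsilon>"
    proof -
      from nl obtain \<epsilon> where "\<epsilon> > 0" "\<not> (\<exists>M. \<forall>n\<ge>M. dist (f n) 0 < \<epsilon>)"
        unfolding LIMSEQ_def by blast
      thus ?thesis using that f0 by (auto simp: not_less)
    qed
    have gt: "filterlim (\<lambda>n. g (\<tau> n)) at_top sequentially" by (rule filterlim_compose[OF gl tl])
    have "(SUP m\<in>{n..}. ereal (f m * g (\<tau> m))) = \<infinity>" for n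
      unfolding top_ereal_def[symmetric] SUP_eq_top_iff
    proof (intro allI impI)
      fix x :: ereal assume "x < top"
      hence "x < \<infinity>" by (simp add: top_ereal_def)
      then obtain B :: nat where B: "x < ereal (real B)" using less_PInf_Ex_of_nat by auto
      have "\<forall>\<^sub>F m in sequentially. real B / \<epsilon> + 1 \<le> g (\<tau> m)"
        using gt unfolding filterlim_at_top by blast
      then obtain M where M: "\<And>m. m \<ge> M \<Longrightarrow> real B / \<epsilon> + 1 \<le> g (\<tau> m)"
        unfolding eventually_sequentially by blast
      obtain m where m: "m \<ge> max n M" "f m \<ge> \<epsilon>" using freq by blast
      have gm: "real B / \<epsilon> + 1 \<le> g (\<tau> m)" using M m by simp
      have gpos: "g (\<tau> m) > 0" using gp tp by blast
      have "real B < \<epsilon> * g (\<tau> m)"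
      proof -
        have "real B = \<epsilon> * (real B / \<epsilon>)" using eps by simp
        also have "\<dots> < \<epsilon> * g (\<tau> m)" using gm eps by (intro mult_strict_left_mono) auto
        finally show ?thesis .
      qed
      also have "\<dots> \<le> f m * g (\<tau> m)" using m gpos by (intro mult_right_mono) auto
      finally have "ereal (real B) < ereal (f m * g (\<tau> m))" by simp
      with B have "x < ereal (f m * g (\<tau> m))" by (rule less_trans)
      thus "\<exists>i\<in>{n..}. x < ereal (f i * g (\<tau> i))" using m by auto
    qed
    hence "limsup (\<lambda>m. ereal (f m * g (\<tau> m))) = \<infinity>" unfolding limsup_INF_SUP by simp
    thus ?thesis unfolding f_def .
  qed
  ultimately show ?thesis by blast
qed

end
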